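(* Let $(Y,\rho)$ be a metric space, $\hookrightarrow_*$ a monotone embedding relation on the subsets of $Y$, $X$ a paracompact space, and $\varphi:X\rightrightarrows Y$ a $\rho$-continuous mapping such that each $\varphi(x)$, $x\in X$, is uniformly $UV^*$. Suppose $\mathscr{U}_1$ is a locally finite open cover of $X$ and $\delta_1:\mathscr{U}_1\to(0,+\infty)$. Then there exist a locally finite open cover $\mathscr{U}_2$ of $X$ refining $\mathscr{U}_1$ and functions $\delta_2,\varepsilon_2:\mathscr{U}_2\to(0,+\infty)$ with $\delta_2\le\varepsilon_2$ such that: (i) $\mathbf{O}_{\delta_2(U)}(\varphi(p))\hookrightarrow_*\mathbf{O}_{\varepsilon_2(U)}(\varphi(p))$ for every $U\in\mathscr{U}_2$ and $p\in U$; (ii) $H(\rho)(\varphi(p),\varphi(q))<\delta_2(U)/2$ for every $U\in\mathscr{U}_2$ and $p,q\in U$; (iii) $\varepsilon_2(U_2)\le\delta_1(U_1)/3$ whenever $U_1\in\mathscr{U}_1$, $U_2\in\mathscr{U}_2$ and $U_1\cap U_2\ne\emptyset$.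
   Context: A set-valued mapping $\varphi:X\rightrightarrows Y$ assigns to each $x\in X$ a nonempty subset $\varphi(x)\subset Y$. For a metric space $(Y,\rho)$, $\mathbf{O}_\varepsilon(y)$ is the open $\varepsilon$-ball about $y$ and $\mathbf{O}_\varepsilon(S)=\bigcup_{q\in S}\mathbf{O}_\varepsilon(q)$. The Hausdorff distance of nonempty $S,T\subset Y$ is $H(\rho)(S,T)=\inf\{\varepsilon>0: S\subset\mathbf{O}_\varepsilon(T),\ T\subset\mathbf{O}_\varepsilon(S)\}$. A mapping $\varphi$ is $\rho$-continuous if for every $\varepsilon>0$ each $x\in X$ has a neighbourhood $V$ with $\varphi(x)\subset\mathbf{O}_\varepsilon(\varphi(p))$ and $\varphi(p)\subset\mathbf{O}_\varepsilon(\varphi(x))$ for all $p\in V$. An embedding relation $\hookrightarrow_*$ on subsets of $Y$ is a relation with $S\hookrightarrow_*T$ implying $S\subset T$; it is monotone if $A\subset S\hookrightarrow_* T\subset B$ implies $A\hookrightarrow_* B$. A subset $S\subset Y$ is uniformly $UV^*$ if for every $\varepsilon>0$ there is $\delta>0$ with $\mathbf{O}_\delta(S)\hookrightarrow_*\mathbf{O}_\varepsilon(S)$. *)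

theory Defs
  imports "HOL-Analysis.Analysis"
begin

definition Onbhd :: "real \<Rightarrow> 'b::metric_space set \<Rightarrow> 'b set" where
  "Onbhd e S = (\<Union>q\<in>S. ball q e)"

definition Hdist :: "'b::metric_space set \<Rightarrow> 'b set \<Rightarrow> ereal" where
  "Hdist S T = Inf {ereal e | e. e > 0 \<and> S \<subseteq> Onbhd e T \<and> T \<subseteq> Onbhd e S}"

definition rho_continuous :: "'a topology \<Rightarrow> ('a \<Rightarrow> 'b::metric_space set) \<Rightarrow> bool" where
  "rho_continuous X \<phi> \<longleftrightarrow>
     (\<forall>e>0. \<forall>x\<in>topspace X. \<exists>V. openin X V \<and> x \<in> V \<and>
        (\<forall>p\<in>V. \<phi> x \<subseteq> Onbhd e (\<phi> p) \<and> \<phi> p \<subseteq> Onbhd e (\<phi> x)))"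

definition embedding_relation :: "('b set \<Rightarrow> 'b set \<Rightarrow> bool) \<Rightarrow> bool" where
  "embedding_relation R \<longleftrightarrow> (\<forall>S T. R S T \<longrightarrow> S \<subseteq> T)"

definition monotone_emb :: "('b set \<Rightarrow> 'b set \<Rightarrow> bool) \<Rightarrow> bool" where
  "monotone_emb R \<longleftrightarrow> (\<forall>A S T B. A \<subseteq> S \<and> R S T \<and> T \<subseteq> B \<longrightarrow> R A B)"

definition uniformly_UV :: "('b::metric_space set \<Rightarrow> 'b set \<Rightarrow> bool) \<Rightarrow> 'b set \<Rightarrow> bool" where
  "uniformly_UV R S \<longleftrightarrow> (\<forall>e>0. \<exists>d>0. R (Onbhd d S) (Onbhd e S))"

definition open_cover :: "'a topology \<Rightarrow> 'a set set \<Rightarrow> bool" where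
  "open_cover X \<U> \<longleftrightarrow> (\<forall>U\<in>\<U>. openin X U) \<and> \<Union>\<U> = topspace X"

definition locally_finite_in :: "'a topology \<Rightarrow> 'a set set \<Rightarrow> bool" where
  "locally_finite_in X \<U> \<longleftrightarrow>
     (\<forall>x\<in>topspace X. \<exists>V. openin X V \<and> x \<in> V \<and> finite {U\<in>\<U>. U \<inter> V \<noteq> {}})"

definition refines :: "'a set set \<Rightarrow> 'a set set \<Rightarrow> bool" where
  "refines \<V> \<U> \<longleftrightarrow> (\<forall>V\<in>\<V>. \<exists>U\<in>\<U>. V \<subseteq> U)"

definition paracompact :: "'a topology \<Rightarrow> bool" where
  "paracompact X \<longleftrightarrow>
     (\<forall>\<U>. open_cover X \<U> \<longrightarrow>
        (\<exists>\<V>. open_cover X \<V> \<and> refines \<V> \<U> \<and> locally_finite_in X \<V>))"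

end

theory Submission
  imports Defs
begin

lemma Onbhd_mono: "e \<le> e' \<Longrightarrow> S \<subseteq> T \<Longrightarrow> Onbhd e S \<subseteq> Onbhd e' T"
  unfolding Onbhd_def by auto

lemma Onbhd_trans:
  assumes "S \<subseteq> Onbhd a T" shows "Onbhd b S \<subseteq> Onbhd (a + b) T"
proof
  fix y assume "y \<in> Onbhd b S"
  then obtain q where q: "q \<in> S" "dist q y < b" unfolding Onbhd_def by auto
  then obtain t where t: "t \<in> T" "dist t q < a" using assms unfolding Onbhd_def by auto
  have "dist t y < a + b" using dist_triangle[of t y q] q t by linarith
  then show "y \<in> Onbhd (a + b) T" using t unfolding Onbhd_def by auto
qed

lemma Hdist_le:
  assumes "e > 0" "S \<subseteq> Onbhd e T" "T \<subseteq> Onbhd e S"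
  shows "Hdist S T \<le> ereal e"
  unfolding Hdist_def by (rule Inf_lower) (use assms in blast)

lemma local_step:
  fixes X :: "'a topology"
    and \<phi> :: "'a \<Rightarrow> 'b::metric_space set"
    and R :: "'b set \<Rightarrow> 'b set \<Rightarrow> bool"
    and \<U>1 :: "'a set set"
    and \<delta>1 :: "'a set \<Rightarrow> real"
  assumes mon: "monotone_emb R"
    and rc: "rho_continuous X \<phi>"
    and uv: "\<forall>x\<in>topspace X. uniformly_UV R (\<phi> x)"
    and oc: "open_cover X \<U>1" and lf: "locally_finite_in X \<U>1"
    and pos: "\<forall>U\<in>\<U>1. \<delta>1 U > 0"
    and x: "x \<in> topspace X"
  shows "\<exists>W d e. openin X W \<and> x \<in> W \<and> 0 < d \<and> d \<le> e \<and> (\<exists>U\<in>\<U>1. W \<subseteq> U) \<and>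
     (\<forall>p\<in>W. R (Onbhd d (\<phi> p)) (Onbhd e (\<phi> p))) \<and>
     (\<forall>p\<in>W. \<forall>q\<in>W. Hdist (\<phi> p) (\<phi> q) < ereal (d / 2)) \<and>
     (\<forall>U1\<in>\<U>1. U1 \<inter> W \<noteq> {} \<longrightarrow> e \<le> \<delta>1 U1 / 3)"
proof -
  obtain V0 where V0: "openin X V0" "x \<in> V0" "finite {U\<in>\<U>1. U \<inter> V0 \<noteq> {}}"
    using lf x unfolding locally_finite_in_def by blast
  define F where "F = {U\<in>\<U>1. U \<inter> V0 \<noteq> {}}"
  obtain U0 where U0: "U0 \<in> \<U>1" "x \<in> U0" using oc x unfolding open_cover_def by blast
  have U0o: "openin X U0" using oc U0 unfolding open_cover_def by blast
  have U0F: "U0 \<in> F" using U0 V0 unfolding F_def by blast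
  have finF: "finite F" using V0 unfolding F_def by simp
  define m where "m = Min (\<delta>1 ` F)"
  have mpos: "m > 0" unfolding m_def using finF U0F pos F_def by (subst Min_gr_iff) auto
  have mle: "\<And>U. U \<in> F \<Longrightarrow> m \<le> \<delta>1 U" unfolding m_def using finF by simp
  define e where "e = m / 3"
  have epos: "e > 0" using mpos e_def by simp
  obtain d where d: "d > 0" "R (Onbhd d (\<phi> x)) (Onbhd (e/2) (\<phi> x))"
    using uv x epos unfolding uniformly_UV_def by (meson half_gt_zero)
  define \<delta> where "\<delta> = min d e / 2"
  define \<eta> where "\<eta> = \<delta> / 8"
  have dpos: "\<delta> > 0" using d epos \<delta>_def by simp
  have etapos: "\<eta> > 0" using dpos \<eta>_def by simp
  obtain V1 where V1: "openin X V1" "x \<in> V1"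
    "\<forall>p\<in>V1. \<phi> x \<subseteq> Onbhd \<eta> (\<phi> p) \<and> \<phi> p \<subseteq> Onbhd \<eta> (\<phi> x)"
    using rc[unfolded rho_continuous_def, rule_format, OF etapos x] by blast
  define W where "W = V0 \<inter> V1 \<inter> U0"
  have Wo: "openin X W" using V0 V1 U0o W_def by auto
  have xW: "x \<in> W" using V0 V1 U0 W_def by auto
  have A: "\<forall>p\<in>W. R (Onbhd \<delta> (\<phi> p)) (Onbhd e (\<phi> p))"
  proof
    fix p assume "p \<in> W"
    then have p: "\<phi> x \<subseteq> Onbhd \<eta> (\<phi> p)" "\<phi> p \<subseteq> Onbhd \<eta> (\<phi> x)" using V1 W_def by auto
    have "Onbhd \<delta> (\<phi> p) \<subseteq> Onbhd (\<eta> + \<delta>) (\<phi> x)" by (rule Onbhd_trans[OF p(2)])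
    also have "\<dots> \<subseteq> Onbhd d (\<phi> x)" by (rule Onbhd_mono) (use d(1) epos in \<open>auto simp: \<eta>_def \<delta>_def min_def\<close>)
    finally have 1: "Onbhd \<delta> (\<phi> p) \<subseteq> Onbhd d (\<phi> x)" .
    have "Onbhd (e/2) (\<phi> x) \<subseteq> Onbhd (\<eta> + e/2) (\<phi> p)" by (rule Onbhd_trans[OF p(1)])
    also have "\<dots> \<subseteq> Onbhd e (\<phi> p)" by (rule Onbhd_mono) (use d(1) epos in \<open>auto simp: \<eta>_def \<delta>_def min_def\<close>)
    finally have 2: "Onbhd (e/2) (\<phi> x) \<subseteq> Onbhd e (\<phi> p)" .
    show "R (Onbhd \<delta> (\<phi> p)) (Onbhd e (\<phi> p))"
      using mon 1 2 d(2) unfolding monotone_emb_def by blast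
  qed
  have B: "\<forall>p\<in>W. \<forall>q\<in>W. Hdist (\<phi> p) (\<phi> q) < ereal (\<delta> / 2)"
  proof (intro ballI)
    fix p q assume "p \<in> W" "q \<in> W"
    then have p: "\<phi> x \<subseteq> Onbhd \<eta> (\<phi> p)" "\<phi> p \<subseteq> Onbhd \<eta> (\<phi> x)"
      and q: "\<phi> x \<subseteq> Onbhd \<eta> (\<phi> q)" "\<phi> q \<subseteq> Onbhd \<eta> (\<phi> x)" using V1 W_def by auto
    have "\<phi> p \<subseteq> Onbhd (\<eta> + \<eta>) (\<phi> q)" using p(2) Onbhd_trans[OF q(1), of \<eta>] by blast
    moreover have "\<phi> q \<subseteq> Onbhd (\<eta> + \<eta>) (\<phi> p)" using q(2) Onbhd_trans[OF p(1), of \<eta>] by blast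
    ultimately have "Hdist (\<phi> p) (\<phi> q) \<le> ereal (\<eta> + \<eta>)" using etapos by (intro Hdist_le) auto
    also have "\<dots> < ereal (\<delta> / 2)" using dpos \<eta>_def by simp
    finally show "Hdist (\<phi> p) (\<phi> q) < ereal (\<delta> / 2)" .
  qed
  have C: "\<forall>U1\<in>\<U>1. U1 \<inter> W \<noteq> {} \<longrightarrow> e \<le> \<delta>1 U1 / 3"
  proof (intro ballI impI)
    fix U1 assume "U1 \<in> \<U>1" "U1 \<inter> W \<noteq> {}"
    then have "U1 \<in> F" unfolding F_def W_def by blast
    then show "e \<le> \<delta>1 U1 / 3" using mle e_def by fastforce
  qed
  have "\<delta> \<le> e" using \<delta>_def epos by simp
  moreover have "\<exists>U\<in>\<U>1. W \<subseteq> U" using U0 W_def by blast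
  ultimately show ?thesis using Wo xW dpos A B C by blast
qed

theorem proposition2p4:
  fixes X :: "'a topology"
    and \<phi> :: "'a \<Rightarrow> 'b::metric_space set"
    and R :: "'b set \<Rightarrow> 'b set \<Rightarrow> bool"
    and \<U>1 :: "'a set set"
    and \<delta>1 :: "'a set \<Rightarrow> real"
  assumes "embedding_relation R" and "monotone_emb R"
    and "paracompact X"
    and "\<forall>x\<in>topspace X. \<phi> x \<noteq> {}"
    and "rho_continuous X \<phi>"
    and "\<forall>x\<in>topspace X. uniformly_UV R (\<phi> x)"
    and "open_cover X \<U>1" and "locally_finite_in X \<U>1"
    and "\<forall>U\<in>\<U>1. \<delta>1 U > 0"
  shows "\<exists>\<U>2 \<delta>2 \<epsilon>2. open_cover X \<U>2 \<and> locally_finite_in X \<U>2 \<and> refines \<U>2 \<U>1 \<and>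
     (\<forall>U\<in>\<U>2. 0 < \<delta>2 U \<and> 0 < \<epsilon>2 U \<and> \<delta>2 U \<le> \<epsilon>2 U) \<and>
     (\<forall>U\<in>\<U>2. \<forall>p\<in>U. R (Onbhd (\<delta>2 U) (\<phi> p)) (Onbhd (\<epsilon>2 U) (\<phi> p))) \<and>
     (\<forall>U\<in>\<U>2. \<forall>p\<in>U. \<forall>q\<in>U. Hdist (\<phi> p) (\<phi> q) < ereal (\<delta>2 U / 2)) \<and>
     (\<forall>U1\<in>\<U>1. \<forall>U2\<in>\<U>2. U1 \<inter> U2 \<noteq> {} \<longrightarrow> \<epsilon>2 U2 \<le> \<delta>1 U1 / 3)"
proof -
  have "\<forall>x\<in>topspace X. \<exists>W d e. openin X W \<and> x \<in> W \<and> 0 < d \<and> d \<le> e \<and> (\<exists>U\<in>\<U>1. W \<subseteq> U) \<and>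
     (\<forall>p\<in>W. R (Onbhd d (\<phi> p)) (Onbhd e (\<phi> p))) \<and>
     (\<forall>p\<in>W. \<forall>q\<in>W. Hdist (\<phi> p) (\<phi> q) < ereal (d / 2)) \<and>
     (\<forall>U1\<in>\<U>1. U1 \<inter> W \<noteq> {} \<longrightarrow> e \<le> \<delta>1 U1 / 3)"
    using local_step[OF assms(2) assms(5) assms(6) assms(7) assms(8) assms(9)] by blast
  then obtain W d e where P: "\<And>x. x \<in> topspace X \<Longrightarrow> openin X (W x) \<and> x \<in> W x \<and> 0 < d x \<and> d x \<le> e x \<and> (\<exists>U\<in>\<U>1. W x \<subseteq> U) \<and>
     (\<forall>p\<in>W x. R (Onbhd (d x) (\<phi> p)) (Onbhd (e x) (\<phi> p))) \<and>
     (\<forall>p\<in>W x. \<forall>q\<in>W x. Hdist (\<phi> p) (\<phi> q) < ereal (d x / 2)) \<and>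
     (\<forall>U1\<in>\<U>1. U1 \<inter> W x \<noteq> {} \<longrightarrow> e x \<le> \<delta>1 U1 / 3)"
    by metis
  have "open_cover X (W ` topspace X)"
    unfolding open_cover_def using P openin_subset by fastforce
  then obtain \<V> where V: "open_cover X \<V>" "refines \<V> (W ` topspace X)" "locally_finite_in X \<V>"
    using assms(3) unfolding paracompact_def by blast
  define c where "c V = (SOME x. x \<in> topspace X \<and> V \<subseteq> W x)" for V
  have c: "c V \<in> topspace X \<and> V \<subseteq> W (c V)" if "V \<in> \<V>" for V
  proof -
    have "\<exists>x. x \<in> topspace X \<and> V \<subseteq> W x" using V(2) that unfolding refines_def by blast
    then show ?thesis unfolding c_def by (rule someI_ex)
  qed
  show ?thesis
  proof (intro exI conjI)
    show "open_cover X \<V>" using V(1) .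
    show "locally_finite_in X \<V>" using V(3) .
    show "refines \<V> \<U>1" unfolding refines_def
    proof
      fix V assume "V \<in> \<V>"
      then have cV: "c V \<in> topspace X" "V \<subseteq> W (c V)" using c by auto
      then obtain U where "U \<in> \<U>1" "W (c V) \<subseteq> U" using P[OF cV(1)] by auto
      then show "\<exists>U\<in>\<U>1. V \<subseteq> U" using cV by blast
    qed
    show "\<forall>U\<in>\<V>. 0 < (d \<circ> c) U \<and> 0 < (e \<circ> c) U \<and> (d \<circ> c) U \<le> (e \<circ> c) U"
    proof
      fix V assume "V \<in> \<V>"
      then have cV: "c V \<in> topspace X" using c by auto
      show "0 < (d \<circ> c) V \<and> 0 < (e \<circ> c) V \<and> (d \<circ> c) V \<le> (e \<circ> c) V"
        using P[OF cV] by simp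
    qed
    show "\<forall>U\<in>\<V>. \<forall>p\<in>U. R (Onbhd ((d \<circ> c) U) (\<phi> p)) (Onbhd ((e \<circ> c) U) (\<phi> p))"
    proof (intro ballI)
      fix V p assume "V \<in> \<V>" "p \<in> V"
      then have cV: "c V \<in> topspace X" "p \<in> W (c V)" using c by auto
      show "R (Onbhd ((d \<circ> c) V) (\<phi> p)) (Onbhd ((e \<circ> c) V) (\<phi> p))"
        using P[OF cV(1)] cV(2) by simp
    qed
    show "\<forall>U\<in>\<V>. \<forall>p\<in>U. \<forall>q\<in>U. Hdist (\<phi> p) (\<phi> q) < ereal ((d \<circ> c) U / 2)"
    proof (intro ballI)
      fix V p q assume "V \<in> \<V>" "p \<in> V" "q \<in> V"
      then have cV: "c V \<in> topspace X" "p \<in> W (c V)" "q \<in> W (c V)" using c by auto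
      show "Hdist (\<phi> p) (\<phi> q) < ereal ((d \<circ> c) V / 2)"
        using P[OF cV(1)] cV(2,3) by simp
    qed
    show "\<forall>U1\<in>\<U>1. \<forall>U2\<in>\<V>. U1 \<inter> U2 \<noteq> {} \<longrightarrow> (e \<circ> c) U2 \<le> \<delta>1 U1 / 3"
    proof (intro ballI impI)
      fix U1 U2 assume "U1 \<in> \<U>1" "U2 \<in> \<V>" "U1 \<inter> U2 \<noteq> {}"
      then have "U1 \<inter> W (c U2) \<noteq> {}" using c by blast
      moreover have "c U2 \<in> topspace X" using c \<open>U2 \<in> \<V>\<close> by blast
      ultimately show "(e \<circ> c) U2 \<le> \<delta>1 U1 / 3" using P \<open>U1 \<in> \<U>1\<close> by simp
    qed
  qed
qed

end
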